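(* Let $\diamond$ be a weak independence on the analysis instance $\mathcal{D}$ and let $\prec_s$ be the size order. The feasible prefix $\mathcal{P}^{\prec_s}_{\mathcal{D},\diamond}$ of the unfolding $\mathcal{U}_{\mathcal{D},\diamond}$ is $\mathcal{D}$-complete.
   Context: An analysis instance $\mathcal{D}=\langle D,\sqsubseteq,F,d_0\rangle$ consists of a lattice $\langle D,\sqsubseteq,\sqcup,\sqcap\rangle$ with least element $\bot$, monotone bottom-strict transformers $F$, and initial element $d_0$. For $\sigma=f_1\ldots f_m$, $\mathrm{state}(\sigma)=(f_m\circ\cdots\circ f_1)(d_0)$; $\mathrm{reach}(\mathcal{D})$ is the set of reachable elements. A relation $\diamond\subseteq F\times F$ is a weak independence if it is symmetric, irreflexive, and $f\diamond f'$ implies $f(f'(d))=f'(f(d))$ for every $d\in\mathrm{reach}(\mathcal{D})$. A labelled prime event structure (PES) is $\langle E,<,\#,h\rangle$ with $<$ a strict partial order with finite down-sets, $\#$ a symmetric irreflexive conflict relation inherited along $<$, and a labelling $h$. A configuration is a finite causally closed, conflict-free set of events; $[e]=\{e'\colon e'<e\}\cup\{e\}$ is the local configuration of $e$. The interleavings $\mathrm{inter}(C)$ are the label sequences of linearizations of $C$ respecting $<$, and $\mathrm{state}(C)$ is the greatest lower bound (meet) in $D$ of $\{\mathrm{state}(\sigma)\colon\sigma\in\mathrm{inter}(C)\}$. The unfolding $\mathcal{U}_{\mathcal{D},\diamond}$ is obtained from the empty PES by repeatedly adding events $e=\langle f,C\rangle$ where $C$ is a configuration, $f$ is enabled (not yielding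 $\bot$) at $\mathrm{state}(C)$ and $\neg(f\diamond h(e'))$ for every $<$-maximal $e'\in C$, setting $e'<e$ for $e'\in C$, $e'\# e$ for other events $e'\notin C$ with $\neg(f\diamond h(e'))$, and $h(e)=f$, until saturation. Prefixes of a PES are sub-PESs closed under causal predecessors with the projected relations. A strategy is a strict partial order $\prec$ on finite configurations of $\mathcal{U}_{\mathcal{D},\diamond}$ with $C\subsetneq C'\Rightarrow C\prec C'$. An event $e$ is $\prec$-feasible if no causal predecessor of $e$ is a $\prec$-cutoff; a $\prec$-feasible event $e$ is a $\prec$-cutoff if there is a $\prec$-feasible event $e'$ with $[e']\prec[e]$ and $\mathrm{state}([e])\sqsubseteq\mathrm{state}([e'])$. The feasible prefix $\mathcal{P}^{\prec}_{\mathcal{D},\diamond}$ is the unique prefix of $\mathcal{U}_{\mathcal{D},\diamond}$ containing exactly the $\prec$-feasible events that are not $\prec$-cutoffs. The size order is $C\prec_s C'$ iff $|C|<|C'|$. A PES is $\mathcal{D}$-complete iff for every $d\in\mathrm{reach}(\mathcal{D})$ there is a configuration $C$ of it with $d\sqsubseteq\mathrm{state}(C)$. *)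

theory Defs
  imports Main "HOL-Library.FSet"
begin

text \<open>An analysis instance is given by a lattice 'd with least element bot
  (type class bounded_lattice_bot), a set F of transformers and an initial
  element d0.\<close>

definition analysis_instance :: "('d::bounded_lattice_bot \<Rightarrow> 'd) set \<Rightarrow> bool" where
  "analysis_instance F \<longleftrightarrow> (\<forall>f\<in>F. mono f \<and> f bot = bot)"

definition seq_state :: "'d \<Rightarrow> ('d \<Rightarrow> 'd) list \<Rightarrow> 'd" where
  "seq_state d0 \<sigma> = foldl (\<lambda>d f. f d) d0 \<sigma>"

definition reach :: "('d \<Rightarrow> 'd) set \<Rightarrow> 'd \<Rightarrow> 'd set" where
  "reach F d0 = {seq_state d0 \<sigma> | \<sigma>. set \<sigma> \<subseteq> F}"

definition weak_indep ::
  "('d \<Rightarrow> 'd) set \<Rightarrow> 'd \<Rightarrow> (('d \<Rightarrow> 'd) \<Rightarrow> ('d \<Rightarrow> 'd) \<Rightarrow> bool) \<Rightarrow> bool" where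
  "weak_indep F d0 indep \<longleftrightarrow>
     (\<forall>f f'. indep f f' \<longrightarrow> f \<in> F \<and> f' \<in> F) \<and>
     (\<forall>f f'. indep f f' \<longrightarrow> indep f' f) \<and>
     (\<forall>f. \<not> indep f f) \<and>
     (\<forall>f f'. indep f f' \<longrightarrow> (\<forall>d\<in>reach F d0. f (f' d) = f' (f d)))"

datatype 'f event = Ev (lab: 'f) (hist: "'f event fset")

definition causes :: "'f event \<Rightarrow> 'f event \<Rightarrow> bool" where
  "causes e' e \<longleftrightarrow> e' |\<in>| hist e"

definition lconf :: "'f event \<Rightarrow> 'f event set" where
  "lconf e = insert e (fset (hist e))"

definition direct_conflict :: "('f \<Rightarrow> 'f \<Rightarrow> bool) \<Rightarrow> 'f event \<Rightarrow> 'f event \<Rightarrow> bool" where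
  "direct_conflict indep a b \<longleftrightarrow>
     a \<noteq> b \<and> \<not> causes a b \<and> \<not> causes b a \<and> \<not> indep (lab a) (lab b)"

definition conflict :: "('f \<Rightarrow> 'f \<Rightarrow> bool) \<Rightarrow> 'f event \<Rightarrow> 'f event \<Rightarrow> bool" where
  "conflict indep a b \<longleftrightarrow>
     (\<exists>a' b'. (a' = a \<or> causes a' a) \<and> (b' = b \<or> causes b' b) \<and> direct_conflict indep a' b')"

definition config :: "('f \<Rightarrow> 'f \<Rightarrow> bool) \<Rightarrow> 'f event set \<Rightarrow> bool" where
  "config indep C \<longleftrightarrow> finite C \<and>
     (\<forall>e\<in>C. \<forall>e'. causes e' e \<longrightarrow> e' \<in> C) \<and>
     (\<forall>a\<in>C. \<forall>b\<in>C. \<not> conflict indep a b)"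

definition config_of :: "('f \<Rightarrow> 'f \<Rightarrow> bool) \<Rightarrow> 'f event set \<Rightarrow> 'f event set \<Rightarrow> bool" where
  "config_of indep E C \<longleftrightarrow> C \<subseteq> E \<and> config indep C"

definition maximal :: "'f event set \<Rightarrow> 'f event set" where
  "maximal C = {e \<in> C. \<not> (\<exists>e''\<in>C. causes e e'')}"

definition inter :: "'f event set \<Rightarrow> 'f list set" where
  "inter C = {map lab es | es. distinct es \<and> set es = C \<and>
      (\<forall>i j. i < j \<and> j < length es \<longrightarrow> \<not> causes (es ! j) (es ! i))}"

definition conf_state :: "'d::lattice \<Rightarrow> ('d \<Rightarrow> 'd) event set \<Rightarrow> 'd" where
  "conf_state d0 C = Inf_fin (seq_state d0 ` inter C)"

text \<open>The unfolding: saturation of the event-adding construction, i.e. the least set closed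
  under adding events <f,C>.\<close>
inductive_set unf :: "('d::bounded_lattice_bot \<Rightarrow> 'd) set \<Rightarrow> (('d \<Rightarrow> 'd) \<Rightarrow> ('d \<Rightarrow> 'd) \<Rightarrow> bool)
    \<Rightarrow> 'd \<Rightarrow> ('d \<Rightarrow> 'd) event set"
  for F indep d0 where
  add: "(\<forall>e. e |\<in>| C \<longrightarrow> e \<in> unf F indep d0) \<Longrightarrow> config indep (fset C) \<Longrightarrow> f \<in> F \<Longrightarrow>
        f (conf_state d0 (fset C)) \<noteq> bot \<Longrightarrow>
        (\<forall>e\<in>maximal (fset C). \<not> indep f (lab e)) \<Longrightarrow> Ev f C \<in> unf F indep d0"

definition fc_spec :: "('d::lattice \<Rightarrow> 'd) event set \<Rightarrow> (('d \<Rightarrow> 'd) event set \<Rightarrow> ('d \<Rightarrow> 'd) event set \<Rightarrow> bool)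
    \<Rightarrow> 'd \<Rightarrow> (('d \<Rightarrow> 'd) event \<Rightarrow> bool) \<Rightarrow> (('d \<Rightarrow> 'd) event \<Rightarrow> bool) \<Rightarrow> bool" where
  "fc_spec U prec d0 feas ct \<longleftrightarrow>
     (\<forall>e. e \<notin> U \<longrightarrow> \<not> feas e \<and> \<not> ct e) \<and>
     (\<forall>e\<in>U. (feas e \<longleftrightarrow> (\<forall>e'. causes e' e \<longrightarrow> \<not> ct e')) \<and>
             (ct e \<longleftrightarrow> feas e \<and> (\<exists>e'\<in>U. feas e' \<and> prec (lconf e') (lconf e) \<and>
                                   conf_state d0 (lconf e) \<le> conf_state d0 (lconf e'))))"

definition feasible_prefix :: "('d::lattice \<Rightarrow> 'd) event set
    \<Rightarrow> (('d \<Rightarrow> 'd) event set \<Rightarrow> ('d \<Rightarrow> 'd) event set \<Rightarrow> bool) \<Rightarrow> 'd \<Rightarrow> ('d \<Rightarrow> 'd) event set" where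
  "feasible_prefix U prec d0 =
     (let p = (THE p. fc_spec U prec d0 (fst p) (snd p))
      in {e \<in> U. fst p e \<and> \<not> snd p e})"

definition size_ord :: "'e set \<Rightarrow> 'e set \<Rightarrow> bool" where
  "size_ord C C' \<longleftrightarrow> card C < card C'"

definition D_complete :: "('d::lattice \<Rightarrow> 'd) set \<Rightarrow> 'd \<Rightarrow> (('d \<Rightarrow> 'd) \<Rightarrow> ('d \<Rightarrow> 'd) \<Rightarrow> bool)
    \<Rightarrow> ('d \<Rightarrow> 'd) event set \<Rightarrow> bool" where
  "D_complete F d0 indep E \<longleftrightarrow>
     (\<forall>d\<in>reach F d0. \<exists>C. config_of indep E C \<and> d \<le> conf_state d0 C)"

end

theory Submission
  imports Defs
begin



definition lin :: "'f event list \<Rightarrow> 'f event set \<Rightarrow> bool" where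
  "lin es S \<longleftrightarrow> distinct es \<and> set es = S \<and> sorted_wrt (\<lambda>a b. \<not> causes b a) es"

definition PW :: "('f \<Rightarrow> 'f \<Rightarrow> bool) \<Rightarrow> 'f event set \<Rightarrow> bool" where
  "PW indep S \<longleftrightarrow> (\<forall>a\<in>S. \<forall>b\<in>S. a \<noteq> b \<and> \<not> causes a b \<and> \<not> causes b a \<longrightarrow> indep (lab a) (lab b))"

lemma inter_alt: "inter C = {map lab es | es. lin es C}"
  unfolding inter_def lin_def sorted_wrt_iff_nth_less by auto

lemma seq_state_append: "seq_state d (xs @ ys) = seq_state (seq_state d xs) ys"
  by (simp add: seq_state_def)

lemma seq_state_Cons: "seq_state d (f # xs) = seq_state (f d) xs"
  by (simp add: seq_state_def)

lemma seq_state_Nil[simp]: "seq_state d [] = d"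
  by (simp add: seq_state_def)

lemma seq_state_single[simp]: "seq_state d [f] = f d"
  by (simp add: seq_state_def)

lemma reach_d0: "d0 \<in> reach F d0"
  unfolding reach_def by (auto intro!: exI[of _ "[]"])

lemma reach_step: "d \<in> reach F d0 \<Longrightarrow> f \<in> F \<Longrightarrow> f d \<in> reach F d0"
  unfolding reach_def
proof clarify
  fix \<sigma> assume "set \<sigma> \<subseteq> F" "f \<in> F"
  then show "\<exists>\<sigma>'. f (seq_state d0 \<sigma>) = seq_state d0 \<sigma>' \<and> set \<sigma>' \<subseteq> F"
    by (intro exI[of _ "\<sigma> @ [f]"]) (simp add: seq_state_append)
qed

lemma reach_seq: "d \<in> reach F d0 \<Longrightarrow> set gs \<subseteq> F \<Longrightarrow> seq_state d gs \<in> reach F d0"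
  by (induction gs arbitrary: d) (auto simp: seq_state_Cons intro: reach_step)

lemma seq_bot: "\<forall>f\<in>set gs. f bot = bot \<Longrightarrow> seq_state bot gs = bot"
  by (induction gs) (auto simp: seq_state_Cons)

lemma seq_mono: "\<forall>f\<in>set gs. mono f \<Longrightarrow> (a::'a::order) \<le> b \<Longrightarrow> seq_state a gs \<le> seq_state b gs"
  by (induction gs arbitrary: a b) (auto simp: seq_state_Cons mono_def)

lemma commute:
  assumes wi: "weak_indep F d0 indep" and "d \<in> reach F d0" and "\<forall>g\<in>set gs. indep f g"
  shows "seq_state d (f # gs) = seq_state d (gs @ [f])"
  using assms(2,3)
proof (induction gs arbitrary: d)
  case Nil then show ?case by simp
next
  case (Cons g gs)
  have ig: "indep f g" using Cons.prems by simp
  have gF: "g \<in> F" using wi ig unfolding weak_indep_def by blast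
  have c: "f (g d) = g (f d)" using wi ig Cons.prems(1) unfolding weak_indep_def by blast
  have "seq_state d (f # g # gs) = seq_state (f (g d)) gs" by (simp add: seq_state_Cons c)
  also have "\<dots> = seq_state (g d) (f # gs)" by (simp add: seq_state_Cons)
  also have "\<dots> = seq_state (g d) (gs @ [f])"
    using Cons.IH[of "g d"] Cons.prems reach_step[OF Cons.prems(1) gF] by simp
  also have "\<dots> = seq_state d ((g # gs) @ [f])" by (simp add: seq_state_Cons)
  finally show ?case .
qed

lemma equal_states:
  assumes wi: "weak_indep F d0 indep" and pw: "PW indep A" and labF: "\<forall>x\<in>A. lab x \<in> F"
    and "lin es1 S" "lin es2 S" "S \<subseteq> A" "d \<in> reach F d0"
  shows "seq_state d (map lab es1) = seq_state d (map lab es2)"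
  using assms(4-)
proof (induction es1 arbitrary: es2 S d)
  case Nil then show ?case by (simp add: lin_def)
next
  case (Cons x r1)
  have d2: "distinct es2" and s2: "sorted_wrt (\<lambda>a b. \<not> causes b a) es2" and set2: "set es2 = S"
    using Cons.prems(2) unfolding lin_def by auto
  have d1: "distinct (x # r1)" and s1: "sorted_wrt (\<lambda>a b. \<not> causes b a) (x # r1)" and set1: "set (x#r1) = S"
    using Cons.prems(1) unfolding lin_def by auto
  have SA: "S \<subseteq> A" and dr: "d \<in> reach F d0" using Cons.prems(3,4) .
  have xin: "x \<in> set es2" unfolding set2 set1[symmetric] by simp
  then obtain ys zs where es2: "es2 = ys @ x # zs" by (meson split_list)
  have xS: "x \<in> S" using xin set2 by simp
  have xA: "x \<in> A" using SA xS by (rule subsetD)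
  have ind: "\<forall>g\<in>set (map lab ys). indep (lab x) g"
  proof
    fix g assume "g \<in> set (map lab ys)"
    then obtain y where y: "y \<in> set ys" "g = lab y" by auto
    have yx: "y \<noteq> x" using d2 y(1) unfolding es2 by auto
    have yS: "y \<in> S" using y(1) unfolding set2[symmetric] es2 by simp
    have "y \<in> set r1" using yS yx unfolding set1[symmetric] by simp
    then have nc1: "\<not> causes y x" using s1 by simp
    have nc2: "\<not> causes x y" using s2 y(1) unfolding es2 sorted_wrt_append by simp
    have yA: "y \<in> A" using SA yS by (rule subsetD)
    have "indep (lab x) (lab y)"
      using pw[unfolded PW_def, rule_format, OF xA yA] yx nc1 nc2 by blast
    then show "indep (lab x) g" using y(2) by simp
  qed
  have cm: "seq_state d (map lab ys @ [lab x]) = seq_state d (lab x # map lab ys)"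
    using commute[OF wi dr, where gs="map lab ys" and f="lab x", OF ind] by simp
  have lr1: "lin r1 (S - {x})"
  proof -
    have "x \<notin> set r1" using d1 by simp
    then have "set r1 = S - {x}" using set1 by auto
    moreover have "distinct r1" using d1 by simp
    moreover have "sorted_wrt (\<lambda>a b. \<not> causes b a) r1" using s1 by simp
    ultimately show ?thesis unfolding lin_def by simp
  qed
  have lyz: "lin (ys @ zs) (S - {x})"
  proof -
    have dd: "distinct (ys @ zs)" "x \<notin> set ys" "x \<notin> set zs" using d2 unfolding es2 by auto
    have "set (ys @ zs) = set es2 - {x}" using dd unfolding es2 by auto
    then have "set (ys @ zs) = S - {x}" using set2 by simp
    moreover have "sorted_wrt (\<lambda>a b. \<not> causes b a) (ys @ zs)"
      using s2 unfolding es2 sorted_wrt_append by simp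
    ultimately show ?thesis unfolding lin_def using dd by simp
  qed
  have xd: "lab x d \<in> reach F d0" using reach_step[OF dr] labF xA by blast
  have SA': "S - {x} \<subseteq> A" using SA by blast
  have IH: "seq_state (lab x d) (map lab r1) = seq_state (lab x d) (map lab (ys @ zs))"
    using Cons.IH[OF lr1 lyz SA' xd] .
  have "seq_state d (map lab es2) = seq_state (seq_state d (map lab ys @ [lab x])) (map lab zs)"
    by (simp add: es2 seq_state_def)
  also have "\<dots> = seq_state (seq_state d (lab x # map lab ys)) (map lab zs)"
    by (simp only: cm)
  also have "\<dots> = seq_state (lab x d) (map lab (ys @ zs))"
    by (simp add: seq_state_Cons seq_state_append)
  also have "\<dots> = seq_state (lab x d) (map lab r1)" using IH by simp
  finally show ?case by (simp add: seq_state_Cons)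
qed

lemma conf_state_lin:
  assumes wi: "weak_indep F d0 indep" and pw: "PW indep A" and labF: "\<forall>x\<in>A. lab x \<in> F"
    and les: "lin es C" and CA: "C \<subseteq> A"
  shows "conf_state d0 C = seq_state d0 (map lab es)"
proof -
  have "seq_state d0 ` inter C = {seq_state d0 (map lab es)}"
  proof (rule set_eqI, rule iffI)
    fix v assume "v \<in> seq_state d0 ` inter C"
    then obtain es' where es': "lin es' C" "v = seq_state d0 (map lab es')"
      unfolding inter_alt by blast
    have "seq_state d0 (map lab es') = seq_state d0 (map lab es)"
      by (rule equal_states[OF wi pw labF es'(1) les CA reach_d0])
    then show "v \<in> {seq_state d0 (map lab es)}" using es'(2) by simp
  next
    fix v assume "v \<in> {seq_state d0 (map lab es)}"
    moreover have "map lab es \<in> inter C" unfolding inter_alt using les by blast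
    ultimately show "v \<in> seq_state d0 ` inter C" by blast
  qed
  then show ?thesis unfolding conf_state_def by simp
qed

lemma finite_inter: "finite C \<Longrightarrow> finite (inter C)"
proof -
  assume "finite C"
  then have "finite (map lab ` {xs. set xs \<subseteq> C \<and> distinct xs})" by (simp add: finite_subset_distinct)
  moreover have "inter C \<subseteq> map lab ` {xs. set xs \<subseteq> C \<and> distinct xs}"
  proof
    fix y assume "y \<in> inter C"
    then obtain es where "lin es C" "y = map lab es" unfolding inter_alt by blast
    then show "y \<in> map lab ` {xs. set xs \<subseteq> C \<and> distinct xs}" unfolding lin_def by blast
  qed
  ultimately show ?thesis by (rule finite_subset[rotated])
qed

lemma conf_state_le:
  assumes fin: "finite C" and les: "lin es C"
  shows "conf_state d0 C \<le> seq_state d0 (map lab es)"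
proof -
  have "map lab es \<in> inter C" unfolding inter_alt using les by blast
  then have "seq_state d0 (map lab es) \<in> seq_state d0 ` inter C" by (rule imageI)
  moreover have "finite (seq_state d0 ` inter C)" using finite_inter[OF fin] by (rule finite_imageI)
  ultimately show ?thesis unfolding conf_state_def by (rule Inf_fin.coboundedI[rotated])
qed




lemma not_causes_self: "\<not> causes e e"
proof (induction e)
  case (Ev f C)
  then show ?case unfolding causes_def by (metis event.sel(2))
qed

lemma unf_facts:
  assumes "e \<in> unf F indep d0"
  shows "lab e \<in> F" "config indep (fset (hist e))" "\<And>x. causes x e \<Longrightarrow> x \<in> unf F indep d0"
  using assms by (cases rule: unf.cases; auto simp: causes_def)+

lemma unf_trans:
  assumes "e \<in> unf F indep d0" "causes a e" "causes z a"
  shows "causes z e"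
proof -
  have "config indep (fset (hist e))" using unf_facts(2)[OF assms(1)] .
  then show ?thesis using assms(2,3) unfolding config_def causes_def by blast
qed

definition lev :: "'f event \<Rightarrow> nat" where "lev e = card (lconf e)"

lemma lev_less:
  assumes "e \<in> unf F indep d0" "causes a e"
  shows "lev a < lev e"
proof -
  have sub: "lconf a \<subseteq> fset (hist e)"
    using unf_trans[OF assms] assms(2) unfolding lconf_def causes_def by blast
  have "e \<notin> fset (hist e)" using not_causes_self[of e] unfolding causes_def by simp
  then have "card (fset (hist e)) < card (lconf e)" unfolding lconf_def by simp
  moreover have "card (lconf a) \<le> card (fset (hist e))" by (rule card_mono[OF _ sub]) simp
  ultimately show ?thesis unfolding lev_def by simp
qed

lemma finite_lconf: "finite (lconf e)" unfolding lconf_def by simp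

lemma lin_exists:
  assumes "finite S" "S \<subseteq> unf F indep d0"
  shows "\<exists>es. lin es S"
proof -
  obtain xs where xs: "set xs = S" using finite_list[OF assms(1)] by blast
  define es where "es = sort_key lev (remdups xs)"
  have "sorted_wrt (\<lambda>a b. lev a \<le> lev b) es"
    using sorted_sort_key[of lev "remdups xs"] unfolding es_def by (simp add: sorted_wrt_map)
  then have "sorted_wrt (\<lambda>a b. \<not> causes b a) es"
    by (rule sorted_wrt_mono_rel[rotated])
       (use assms(2) xs lev_less in \<open>fastforce simp: es_def\<close>)
  then show ?thesis unfolding lin_def es_def using xs by (intro exI[of _ es]) (simp add: es_def)
qed

primrec AA :: "('d::lattice \<Rightarrow> 'd) event set \<Rightarrow> 'd \<Rightarrow> nat \<Rightarrow>
    ((('d \<Rightarrow> 'd) event \<Rightarrow> bool) \<times> (('d \<Rightarrow> 'd) event \<Rightarrow> bool))" where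
  "AA U d0 0 = (\<lambda>_. False, \<lambda>_. False)"
| "AA U d0 (Suc n) =
    (let f = fst (AA U d0 n); c = snd (AA U d0 n);
         f' = (\<lambda>e. if lev e = n then e \<in> U \<and> (\<forall>e'. causes e' e \<longrightarrow> \<not> c e') else f e)
     in (f', \<lambda>e. if lev e = n then e \<in> U \<and> f' e \<and> (\<exists>e'\<in>U. f e' \<and> size_ord (lconf e') (lconf e) \<and>
            conf_state d0 (lconf e) \<le> conf_state d0 (lconf e')) else c e))"

lemma AA_stable: "lev e < n \<Longrightarrow> AA U d0 n = p \<Longrightarrow>
   fst p e = fst (AA U d0 (Suc (lev e))) e \<and> snd p e = snd (AA U d0 (Suc (lev e))) e"
proof (induction n arbitrary: p)
  case 0 then show ?case by simp
next
  case (Suc n)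
  show ?case
  proof (cases "lev e = n")
    case True then show ?thesis using Suc.prems by simp
  next
    case False
    then have "lev e < n" using Suc.prems by simp
    then show ?thesis using Suc.IH[OF _ refl] Suc.prems False by (auto simp: Let_def)
  qed
qed

lemma spec_exists:
  fixes U :: "('d::bounded_lattice_bot \<Rightarrow> 'd) event set"
  assumes U: "U = unf F indep d0"
  shows "fc_spec U size_ord d0 (\<lambda>e. fst (AA U d0 (Suc (lev e))) e) (\<lambda>e. snd (AA U d0 (Suc (lev e))) e)"
proof -
  define fe where "fe = (\<lambda>e. fst (AA U d0 (Suc (lev e))) e)"
  define ce where "ce = (\<lambda>e. snd (AA U d0 (Suc (lev e))) e)"
  have st: "lev e' < lev e \<Longrightarrow> fst (AA U d0 (lev e)) e' = fe e' \<and> snd (AA U d0 (lev e)) e' = ce e'" for e e'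
    using AA_stable[OF _ refl] unfolding fe_def ce_def by blast
  have fe_eq: "fe e \<longleftrightarrow> e \<in> U \<and> (\<forall>e'. causes e' e \<longrightarrow> \<not> ce e')" for e
  proof -
    have "fe e \<longleftrightarrow> e \<in> U \<and> (\<forall>e'. causes e' e \<longrightarrow> \<not> snd (AA U d0 (lev e)) e')"
      unfolding fe_def by (simp add: Let_def)
    also have "\<dots> \<longleftrightarrow> e \<in> U \<and> (\<forall>e'. causes e' e \<longrightarrow> \<not> ce e')"
      using st lev_less U by blast
    finally show ?thesis .
  qed
  have ce_eq: "ce e \<longleftrightarrow> e \<in> U \<and> fe e \<and> (\<exists>e'\<in>U. fe e' \<and> size_ord (lconf e') (lconf e) \<and>
            conf_state d0 (lconf e) \<le> conf_state d0 (lconf e'))" for e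
  proof -
    have "ce e \<longleftrightarrow> e \<in> U \<and> fe e \<and> (\<exists>e'\<in>U. fst (AA U d0 (lev e)) e' \<and> size_ord (lconf e') (lconf e) \<and>
            conf_state d0 (lconf e) \<le> conf_state d0 (lconf e'))"
      unfolding ce_def fe_def by (simp add: Let_def)
    also have "\<dots> \<longleftrightarrow> e \<in> U \<and> fe e \<and> (\<exists>e'\<in>U. fe e' \<and> size_ord (lconf e') (lconf e) \<and>
            conf_state d0 (lconf e) \<le> conf_state d0 (lconf e'))"
      using st unfolding size_ord_def lev_def by blast
    finally show ?thesis .
  qed
  show ?thesis unfolding fc_spec_def fe_def[symmetric] ce_def[symmetric]
    using fe_eq ce_eq by blast
qed

lemma spec_unique:
  fixes U :: "('d::bounded_lattice_bot \<Rightarrow> 'd) event set"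
  assumes U: "U = unf F indep d0"
    and s1: "fc_spec U size_ord d0 f1 c1" and s2: "fc_spec U size_ord d0 f2 c2"
  shows "f1 = f2 \<and> c1 = c2"
proof -
  have "\<forall>e::('d \<Rightarrow> 'd) event. lev e = n \<longrightarrow> f1 e = f2 e \<and> c1 e = c2 e" for n
  proof (induction n rule: less_induct)
    case (less n)
    show ?case
    proof (intro allI impI)
      fix e :: "('d \<Rightarrow> 'd) event" assume en: "lev e = n"
      show "f1 e = f2 e \<and> c1 e = c2 e"
      proof (cases "e \<in> U")
        case False then show ?thesis using s1 s2 unfolding fc_spec_def by blast
      next
        case True
        have IH: "lev e' < lev e \<Longrightarrow> f1 e' = f2 e' \<and> c1 e' = c2 e'" for e'
          using less en by blast
        have a: "f1 e \<longleftrightarrow> (\<forall>e'. causes e' e \<longrightarrow> \<not> c1 e')" "f2 e \<longleftrightarrow> (\<forall>e'. causes e' e \<longrightarrow> \<not> c2 e')"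
          using s1 s2 True unfolding fc_spec_def by blast+
        have cc: "causes e' e \<Longrightarrow> c1 e' = c2 e'" for e'
          using IH lev_less[of e F indep d0 e'] True U by blast
        have ff: "f1 e = f2 e" unfolding a using cc by blast
        have b: "c1 e \<longleftrightarrow> f1 e \<and> (\<exists>e'\<in>U. f1 e' \<and> size_ord (lconf e') (lconf e) \<and>
                                   conf_state d0 (lconf e) \<le> conf_state d0 (lconf e'))"
                "c2 e \<longleftrightarrow> f2 e \<and> (\<exists>e'\<in>U. f2 e' \<and> size_ord (lconf e') (lconf e) \<and>
                                   conf_state d0 (lconf e) \<le> conf_state d0 (lconf e'))"
          using s1 s2 True unfolding fc_spec_def by blast+
        have ff2: "card (lconf e') < card (lconf e) \<Longrightarrow> f1 e' = f2 e'" for e'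
          using IH unfolding lev_def by blast
        have "c1 e = c2 e" unfolding b ff size_ord_def using ff2 by blast
        with ff show ?thesis by simp
      qed
    qed
  qed
  then show ?thesis by auto
qed

lemma spec_the:
  fixes U :: "('d::bounded_lattice_bot \<Rightarrow> 'd) event set"
  assumes U: "U = unf F indep d0"
  shows "fc_spec U size_ord d0 (fst (THE p. fc_spec U size_ord d0 (fst p) (snd p)))
                               (snd (THE p. fc_spec U size_ord d0 (fst p) (snd p)))"
proof -
  have "\<exists>!p. fc_spec U size_ord d0 (fst p) (snd p)"
  proof (rule ex1I)
    show "fc_spec U size_ord d0 (fst (\<lambda>e. fst (AA U d0 (Suc (lev e))) e, \<lambda>e. snd (AA U d0 (Suc (lev e))) e))
      (snd (\<lambda>e. fst (AA U d0 (Suc (lev e))) e, \<lambda>e. snd (AA U d0 (Suc (lev e))) e))"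
      using spec_exists[OF U] by simp
  next
    fix p assume "fc_spec U size_ord d0 (fst p) (snd p)"
    then show "p = (\<lambda>e. fst (AA U d0 (Suc (lev e))) e, \<lambda>e. snd (AA U d0 (Suc (lev e))) e)"
    proof -
      have "fst p = (\<lambda>e. fst (AA U d0 (Suc (lev e))) e) \<and> snd p = (\<lambda>e. snd (AA U d0 (Suc (lev e))) e)"
        by (rule spec_unique[OF U \<open>fc_spec U size_ord d0 (fst p) (snd p)\<close> spec_exists[OF U]])
      then show ?thesis by (simp add: prod_eq_iff)
    qed
  qed
  from theI'[OF this] show ?thesis .
qed




definition cclosed :: "'f event set \<Rightarrow> bool" where
  "cclosed S \<longleftrightarrow> (\<forall>e\<in>S. \<forall>x. causes x e \<longrightarrow> x \<in> S)"

lemma config_intro: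
  assumes "finite S" "cclosed S" "PW indep S"
  shows "config indep S"
  unfolding config_def
proof (intro conjI ballI)
  show "finite S" by fact
  show "\<forall>e'. causes e' e \<longrightarrow> e' \<in> S" if "e \<in> S" for e using assms(2) that unfolding cclosed_def by blast
  fix a b assume ab: "a \<in> S" "b \<in> S"
  show "\<not> conflict indep a b"
  proof
    assume "conflict indep a b"
    then obtain a' b' where "a' = a \<or> causes a' a" "b' = b \<or> causes b' b" "direct_conflict indep a' b'"
      unfolding conflict_def by blast
    moreover then have "a' \<in> S" "b' \<in> S" using ab assms(2) unfolding cclosed_def by blast+
    ultimately show False using assms(3) unfolding PW_def direct_conflict_def by blast
  qed
qed

definition extP :: "('f \<Rightarrow> 'f \<Rightarrow> bool) \<Rightarrow> 'f event list \<Rightarrow> 'f \<Rightarrow> 'f event \<Rightarrow> bool" where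
  "extP indep es f x \<longleftrightarrow> (\<exists>y\<in>set es. \<not> indep f (lab y) \<and> (x = y \<or> causes x y))"

definition ext :: "('f \<Rightarrow> 'f \<Rightarrow> bool) \<Rightarrow> 'f event list \<Rightarrow> 'f \<Rightarrow> 'f event list" where
  "ext indep es f = es @ [Ev f (fset_of_list (filter (extP indep es f) es))]"

definition evs :: "('f \<Rightarrow> 'f \<Rightarrow> bool) \<Rightarrow> 'f list \<Rightarrow> 'f event list" where
  "evs indep \<sigma> = foldl (ext indep) [] \<sigma>"

lemma evs_snoc: "evs indep (\<sigma> @ [f]) = ext indep (evs indep \<sigma>) f"
  by (simp add: evs_def)

definition INV where
  "INV F indep d0 es \<longleftrightarrow> distinct es \<and> set es \<subseteq> unf F indep d0 \<and>
     sorted_wrt (\<lambda>a b. \<not> causes b a) es \<and> cclosed (set es) \<and> PW indep (set es)"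

lemma ai_facts: "analysis_instance F \<Longrightarrow> f \<in> F \<Longrightarrow> mono f \<and> f bot = bot"
  unfolding analysis_instance_def by blast

lemma ext_inv:
  fixes F :: "('d::bounded_lattice_bot \<Rightarrow> 'd) set"
  assumes ai: "analysis_instance F" and wi: "weak_indep F d0 indep"
    and inv: "INV F indep d0 es" and fF: "f \<in> F" and esF: "set (map lab es) \<subseteq> F"
    and nb: "f (seq_state d0 (map lab es)) \<noteq> bot"
  shows "INV F indep d0 (ext indep es f)"
proof -
  let ?U = "unf F indep d0"
  let ?P = "extP indep es f"
  define hs where "hs = filter ?P es"
  define rs where "rs = filter (\<lambda>x. \<not> ?P x) es"
  define D where "D = set hs"
  define e where "e = Ev f (fset_of_list hs)"
  have he: "fset (hist e) = D" unfolding e_def D_def by (simp add: fset_of_list.rep_eq)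
  have ce: "causes x e \<longleftrightarrow> x \<in> D" for x unfolding causes_def using he by (simp add: fset_of_list.rep_eq)
  have dist: "distinct es" and esU: "set es \<subseteq> ?U" and srt: "sorted_wrt (\<lambda>a b. \<not> causes b a) es"
    and cl: "cclosed (set es)" and pw: "PW indep (set es)"
    using inv unfolding INV_def by auto
  have labF: "\<forall>x\<in>set es. lab x \<in> F" using esF by auto
  have Dsub: "D \<subseteq> set es" unfolding D_def hs_def by auto
  have Dcl: "cclosed D"
    unfolding cclosed_def
  proof (intro ballI allI impI)
    fix x z assume x: "x \<in> D" and zx: "causes z x"
    then have xes: "x \<in> set es" and Px: "?P x" unfolding D_def hs_def by auto
    have zes: "z \<in> set es" using cl xes zx unfolding cclosed_def by blast
    from Px obtain y where y: "y \<in> set es" "\<not> indep f (lab y)" "x = y \<or> causes x y"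
      unfolding extP_def by blast
    have "causes z y" using y zx unf_trans[of y F indep d0 x z] esU by blast
    then have "?P z" using y unfolding extP_def by blast
    then show "z \<in> D" using zes unfolding D_def hs_def by simp
  qed
  have Dpw: "PW indep D" using pw Dsub unfolding PW_def by blast
  have Dconf: "config indep D" using config_intro[OF _ Dcl Dpw] unfolding D_def by simp
  have indr: "\<forall>x\<in>set es. \<not> ?P x \<longrightarrow> indep f (lab x)" unfolding extP_def by blast
  have linhs: "lin hs D" unfolding lin_def D_def hs_def using dist srt
    by (auto simp: sorted_wrt_filter)
  have linall: "lin (hs @ rs) (set es)"
    unfolding lin_def
  proof (intro conjI)
    show "distinct (hs @ rs)" using dist unfolding hs_def rs_def by auto
    show "set (hs @ rs) = set es" unfolding hs_def rs_def by auto
    show "sorted_wrt (\<lambda>a b. \<not> causes b a) (hs @ rs)"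
      unfolding sorted_wrt_append
    proof (intro conjI)
      show "sorted_wrt (\<lambda>a b. \<not> causes b a) hs" using srt unfolding hs_def by (simp add: sorted_wrt_filter)
      show "sorted_wrt (\<lambda>a b. \<not> causes b a) rs" using srt unfolding rs_def by (simp add: sorted_wrt_filter)
      show "\<forall>x\<in>set hs. \<forall>y\<in>set rs. \<not> causes y x"
      proof (intro ballI notI)
        fix x y assume x: "x \<in> set hs" and y: "y \<in> set rs" and c: "causes y x"
        have "y \<in> D" using Dcl x c unfolding cclosed_def D_def by blast
        then have "?P y" unfolding D_def hs_def by simp
        moreover have "\<not> ?P y" using y unfolding rs_def by simp
        ultimately show False by contradiction
      qed
    qed
  qed
  have lines: "lin es (set es)" unfolding lin_def using dist srt by simp
  define d1 where "d1 = seq_state d0 (map lab hs)"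
  have hsF: "set (map lab hs) \<subseteq> F" using labF unfolding hs_def by auto
  have d1r: "d1 \<in> reach F d0" unfolding d1_def by (rule reach_seq[OF reach_d0 hsF])
  have "seq_state d0 (map lab es) = seq_state d0 (map lab (hs @ rs))"
    using equal_states[OF wi pw labF lines linall order_refl reach_d0] .
  then have "f (seq_state d0 (map lab es)) = seq_state d1 (map lab rs @ [f])"
    unfolding d1_def by (simp add: seq_state_append)
  also have "\<dots> = seq_state d1 (f # map lab rs)"
    using commute[OF wi d1r, where gs="map lab rs" and f=f] indr unfolding rs_def by auto
  also have "\<dots> = seq_state (f d1) (map lab rs)" by (simp add: seq_state_Cons)
  finally have "f d1 \<noteq> bot"
    using nb seq_bot[of "map lab rs"] ai_facts[OF ai] labF unfolding rs_def by auto
  moreover have "conf_state d0 D = d1"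
    unfolding d1_def using conf_state_lin[OF wi pw labF linhs Dsub] .
  ultimately have en: "f (conf_state d0 (fset (fset_of_list hs))) \<noteq> bot"
    using he unfolding e_def by simp
  have maxi: "\<forall>x\<in>maximal (fset (fset_of_list hs)). \<not> indep f (lab x)"
  proof
    fix x assume "x \<in> maximal (fset (fset_of_list hs))"
    then have x: "x \<in> D" "\<not> (\<exists>e''\<in>D. causes x e'')"
      unfolding maximal_def D_def by (auto simp: fset_of_list.rep_eq)
    then obtain y where y: "y \<in> set es" "\<not> indep f (lab y)" "x = y \<or> causes x y"
      unfolding D_def hs_def extP_def by auto
    have "y \<in> D" using y unfolding D_def hs_def extP_def by auto
    then have "x = y" using x y by blast
    then show "\<not> indep f (lab x)" using y by simp
  qed
  have eU: "e \<in> ?U" unfolding e_def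
  proof (rule unf.add)
    show "\<forall>x. x |\<in>| fset_of_list hs \<longrightarrow> x \<in> ?U" using esU unfolding hs_def
      by (auto simp: fset_of_list_elem)
    show "config indep (fset (fset_of_list hs))" using Dconf unfolding D_def by (simp add: fset_of_list.rep_eq)
  qed (use fF en maxi in auto)
  have enot: "e \<notin> set es"
  proof
    assume "e \<in> set es"
    moreover have "lab e = f" unfolding e_def by simp
    moreover have "\<not> indep f f" using wi unfolding weak_indep_def by blast
    ultimately have "e \<in> D" unfolding D_def hs_def extP_def by auto
    then show False using ce not_causes_self by blast
  qed
  have ext_eq: "ext indep es f = es @ [e]" unfolding ext_def e_def hs_def by simp
  show ?thesis unfolding INV_def ext_eq
  proof (intro conjI)
    show "distinct (es @ [e])" using dist enot by simp
    show "set (es @ [e]) \<subseteq> ?U" using esU eU by simp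
    show "sorted_wrt (\<lambda>a b. \<not> causes b a) (es @ [e])"
      using srt enot cl unfolding sorted_wrt_append cclosed_def by auto
    show "cclosed (set (es @ [e]))" using cl ce Dsub unfolding cclosed_def by auto
    show "PW indep (set (es @ [e]))"
      unfolding PW_def
    proof (intro ballI impI)
      fix a b assume ab: "a \<in> set (es @ [e])" "b \<in> set (es @ [e])"
        and nc: "a \<noteq> b \<and> \<not> causes a b \<and> \<not> causes b a"
      have sym: "indep g h \<Longrightarrow> indep h g" for g h using wi unfolding weak_indep_def by blast
      have le: "lab e = f" unfolding e_def by simp
      have other: "x \<in> set es \<Longrightarrow> \<not> causes x e \<Longrightarrow> indep f (lab x)" for x
        using indr ce unfolding D_def hs_def by auto
      show "indep (lab a) (lab b)"
      proof (cases "a = e")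
        case True
        then have "b \<in> set es" using ab nc by auto
        then show ?thesis using other nc True le by auto
      next
        case False
        note aF = False
        show ?thesis
        proof (cases "b = e")
          case True
          then have "a \<in> set es" using ab nc by auto
          then show ?thesis using other nc True le sym by auto
        next
          case False
          then show ?thesis using aF ab nc pw unfolding PW_def by auto
        qed
      qed
    qed
  qed
qed




lemma evs_inv:
  fixes F :: "('d::bounded_lattice_bot \<Rightarrow> 'd) set"
  assumes ai: "analysis_instance F" and wi: "weak_indep F d0 indep"
  shows "set \<sigma> \<subseteq> F \<Longrightarrow> seq_state d0 \<sigma> \<noteq> bot \<Longrightarrow>
    INV F indep d0 (evs indep \<sigma>) \<and> map lab (evs indep \<sigma>) = \<sigma>"
proof (induction \<sigma> rule: rev_induct)
  case Nil
  then show ?case by (simp add: evs_def INV_def cclosed_def PW_def)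
next
  case (snoc f \<sigma>)
  have fF: "f \<in> F" and sF: "set \<sigma> \<subseteq> F" using snoc.prems by auto
  have nb: "f (seq_state d0 \<sigma>) \<noteq> bot" using snoc.prems(2) by (simp add: seq_state_append)
  have "seq_state d0 \<sigma> \<noteq> bot" using nb ai_facts[OF ai fF] by auto
  then have IH: "INV F indep d0 (evs indep \<sigma>)" "map lab (evs indep \<sigma>) = \<sigma>" using snoc.IH sF by auto
  show ?case unfolding evs_snoc
    using ext_inv[OF ai wi IH(1) fF] IH(2) sF nb by (simp add: ext_def)
qed

theorem theorem6:
  fixes F :: "('d::bounded_lattice_bot \<Rightarrow> 'd) set"
    and d0 :: 'd
    and indep :: "('d \<Rightarrow> 'd) \<Rightarrow> ('d \<Rightarrow> 'd) \<Rightarrow> bool"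
  assumes "analysis_instance F"
    and "weak_indep F d0 indep"
  shows "D_complete F d0 indep (feasible_prefix (unf F indep d0) size_ord d0)"
  unfolding D_complete_def
proof
  fix d assume dr: "d \<in> reach F d0"
  note ai = assms(1) and wi = assms(2)
  define U where "U = unf F indep d0"
  define E where "E = feasible_prefix U size_ord d0"
  define p where "p = (THE p. fc_spec U size_ord d0 (fst p) (snd p))"
  have spec: "fc_spec U size_ord d0 (fst p) (snd p)" unfolding p_def using spec_the[OF U_def] .
  have Edef: "E = {e \<in> U. fst p e \<and> \<not> snd p e}" unfolding E_def feasible_prefix_def p_def Let_def ..
  show "\<exists>C. config_of indep (feasible_prefix (unf F indep d0) size_ord d0) C \<and> d \<le> conf_state d0 C"
  proof (cases "d = bot")
    case True
    show ?thesis
      by (rule exI[of _ "{}"]) (simp add: True config_of_def config_def)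
  next
    case False
    define Q where "Q = (\<lambda>n. \<exists>\<sigma>. set \<sigma> \<subseteq> F \<and> d \<le> seq_state d0 \<sigma> \<and> length \<sigma> = n)"
    have "\<exists>n. Q n" using dr unfolding reach_def Q_def by auto
    then have "Q (LEAST n. Q n)" by (rule LeastI_ex)
    then obtain \<sigma> where s: "set \<sigma> \<subseteq> F" "d \<le> seq_state d0 \<sigma>" "length \<sigma> = (LEAST n. Q n)"
      unfolding Q_def by blast
    have minimal: "\<And>\<sigma>'. set \<sigma>' \<subseteq> F \<Longrightarrow> d \<le> seq_state d0 \<sigma>' \<Longrightarrow> length \<sigma> \<le> length \<sigma>'"
      using s(3) Least_le[of Q] unfolding Q_def by metis
    have nb: "seq_state d0 \<sigma> \<noteq> bot" using s(2) False bot_unique by metis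
    define es where "es = evs indep \<sigma>"
    have inv: "INV F indep d0 es" and mes: "map lab es = \<sigma>" using evs_inv[OF ai wi s(1) nb] es_def by auto
    have dist: "distinct es" and esU: "set es \<subseteq> U" and srt: "sorted_wrt (\<lambda>a b. \<not> causes b a) es"
      and cl: "cclosed (set es)" and pw: "PW indep (set es)"
      using inv unfolding INV_def U_def by auto
    have labF: "\<forall>x\<in>set es. lab x \<in> F" using s(1) mes by auto
    have lines: "lin es (set es)" unfolding lin_def using dist srt by simp
    have cs: "conf_state d0 (set es) = seq_state d0 \<sigma>"
      using conf_state_lin[OF wi pw labF lines order_refl] mes by simp
    have nocut: "\<not> snd p e" if eC: "e \<in> set es" for e
    proof
      assume ct: "snd p e"
      have eU: "e \<in> U" using eC esU by auto
      from spec eU ct obtain e' where e': "e' \<in> U" "card (lconf e') < card (lconf e)"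
        "conf_state d0 (lconf e) \<le> conf_state d0 (lconf e')"
        unfolding fc_spec_def size_ord_def by blast
      define L where "L = lconf e"
      have LC: "L \<subseteq> set es" using cl eC unfolding L_def lconf_def cclosed_def causes_def by auto
      have Lcl: "\<forall>x\<in>L. \<forall>z. causes z x \<longrightarrow> z \<in> L"
        using unf_trans[of e F indep d0] eU unfolding L_def lconf_def U_def causes_def by auto
      define ls where "ls = filter (\<lambda>x. x \<in> L) es"
      define rs where "rs = filter (\<lambda>x. x \<notin> L) es"
      have linls: "lin ls L" unfolding lin_def ls_def using dist srt LC
        by (auto simp: sorted_wrt_filter)
      have linall: "lin (ls @ rs) (set es)"
        unfolding lin_def
      proof (intro conjI)
        show "distinct (ls @ rs)" using dist unfolding ls_def rs_def by auto
        show "set (ls @ rs) = set es" unfolding ls_def rs_def by auto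
        show "sorted_wrt (\<lambda>a b. \<not> causes b a) (ls @ rs)"
          unfolding sorted_wrt_append
          using srt Lcl unfolding ls_def rs_def by (auto simp: sorted_wrt_filter)
      qed
      have e'sub: "lconf e' \<subseteq> U" using e'(1) unf_facts(3)[of e' F indep d0]
        unfolding lconf_def U_def causes_def by auto
      obtain ls' where ls': "lin ls' (lconf e')" using lin_exists[OF finite_lconf e'sub[unfolded U_def]] by blast
      define \<sigma>' where "\<sigma>' = map lab ls' @ map lab rs"
      have s'F: "set \<sigma>' \<subseteq> F"
      proof -
        have "set ls' \<subseteq> U" using ls' e'sub unfolding lin_def by auto
        then have "set (map lab ls') \<subseteq> F" using unf_facts(1)[of _ F indep d0] unfolding U_def by auto
        moreover have "set (map lab rs) \<subseteq> F" using labF unfolding rs_def by auto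
        ultimately show ?thesis unfolding \<sigma>'_def by simp
      qed
      have rsmono: "\<forall>f\<in>set (map lab rs). mono f" using labF ai_facts[OF ai] unfolding rs_def by auto
      have "seq_state d0 \<sigma> = seq_state d0 (map lab (ls @ rs))"
        using equal_states[OF wi pw labF lines linall order_refl reach_d0] mes by simp
      also have "\<dots> = seq_state (seq_state d0 (map lab ls)) (map lab rs)"
        by (simp add: seq_state_append)
      also have "seq_state d0 (map lab ls) = conf_state d0 L"
        using conf_state_lin[OF wi pw labF linls LC] by simp
      also have "seq_state (conf_state d0 L) (map lab rs) \<le> seq_state (seq_state d0 (map lab ls')) (map lab rs)"
      proof (rule seq_mono[OF rsmono])
        show "conf_state d0 L \<le> seq_state d0 (map lab ls')"
          using e'(3) conf_state_le[OF finite_lconf ls'] unfolding L_def by (rule order_trans)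
      qed
      also have "\<dots> = seq_state d0 \<sigma>'" unfolding \<sigma>'_def by (simp add: seq_state_append)
      finally have "d \<le> seq_state d0 \<sigma>'" using s(2) by (meson order_trans)
      then have "length \<sigma> \<le> length \<sigma>'" using minimal s'F by blast
      moreover have "length \<sigma>' < length \<sigma>"
      proof -
        have "length ls' = card (lconf e')" using ls' distinct_card unfolding lin_def by metis
        moreover have "length ls = card L" using linls distinct_card unfolding lin_def by metis
        moreover have "length ls + length rs = length \<sigma>"
          using sum_length_filter_compl[of "\<lambda>x. x \<in> L" es] mes unfolding ls_def rs_def by auto
        ultimately show ?thesis using e'(2) unfolding \<sigma>'_def L_def by simp
      qed
      ultimately show False by simp
    qed
    have feas: "fst p e" if eC: "e \<in> set es" for e
    proof -
      have "e \<in> U" using eC esU by auto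
      moreover have "\<forall>e'. causes e' e \<longrightarrow> \<not> snd p e'"
        using nocut cl eC unfolding cclosed_def by blast
      ultimately show ?thesis using spec unfolding fc_spec_def by blast
    qed
    have "config_of indep E (set es)"
      unfolding config_of_def
    proof
      show "set es \<subseteq> E" unfolding Edef using esU feas nocut by auto
      show "config indep (set es)" using config_intro[OF _ cl pw] by simp
    qed
    then show ?thesis using s(2) cs unfolding E_def U_def by (intro exI[of _ "set es"]) simp
  qed
qed


end
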